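(* Let $\alpha_1,\dots,\alpha_n$ be real numbers and $\omega\in S_n$ with $\alpha_{\omega(1)}\le\alpha_{\omega(2)}\le\dots\le\alpha_{\omega(n)}$. Fix $k\in\{1,\dots,n-1\}$ with $\alpha_{\omega(k)}<\alpha_{\omega(k+1)}$ and let $b,c$ be real numbers with $\alpha_{\omega(k)}<c<b<\alpha_{\omega(k+1)}$ and $f(b)=f(c)$, where $f(t)=(t-\alpha_1)\cdots(t-\alpha_n)$. Put $B_j=\frac{b-\alpha_j}{c-\alpha_j}$ for $j=1,\dots,n$. Then $$B_{\omega(k+1)}\le B_{\omega(k+2)}\le\dots\le B_{\omega(n)}<1<B_{\omega(1)}\le B_{\omega(2)}\le\dots\le B_{\omega(k)}.$$ *)

theory Defs
  imports "HOL-Analysis.Analysis" "HOL-Combinatorics.Permutations"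
begin

end

theory Submission
  imports Defs
begin

lemma aux_low:
  fixes b c x y :: real
  assumes "x \<le> y" "y < c" "c < b"
  shows "(b - x) / (c - x) \<le> (b - y) / (c - y)"
proof -
  have "(b - x) / (c - x) = 1 + (b - c) / (c - x)" using assms by (simp add: field_simps)
  moreover have "(b - y) / (c - y) = 1 + (b - c) / (c - y)" using assms by (simp add: field_simps)
  moreover have "(b - c) / (c - x) \<le> (b - c) / (c - y)"
    using assms by (intro divide_left_mono) (auto intro: mult_pos_pos)
  ultimately show ?thesis by simp
qed

lemma aux_high:
  fixes b c x y :: real
  assumes "x \<le> y" "b < x" "c < b"
  shows "(b - x) / (c - x) \<le> (b - y) / (c - y)"
proof -
  have "(b - x) / (c - x) = (x - b) / (x - c)" using assms by (simp add: field_simps)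
  moreover have "(b - y) / (c - y) = (y - b) / (y - c)" using assms by (simp add: field_simps)
  moreover have "(x - b) / (x - c) = 1 - (b - c) / (x - c)" using assms by (simp add: field_simps)
  moreover have "(y - b) / (y - c) = 1 - (b - c) / (y - c)" using assms by (simp add: field_simps)
  moreover have "(b - c) / (y - c) \<le> (b - c) / (x - c)"
    using assms by (intro divide_left_mono) (auto intro: mult_pos_pos)
  ultimately show ?thesis by simp
qed

theorem lemma8p1:
  fixes \<alpha> :: "nat \<Rightarrow> real" and \<omega> :: "nat \<Rightarrow> nat" and n k :: nat and b c :: real
    and f :: "real \<Rightarrow> real" and B :: "nat \<Rightarrow> real"
  assumes perm: "\<omega> permutes {1..n}"
    and sorted: "\<And>i j. 1 \<le> i \<Longrightarrow> i \<le> j \<Longrightarrow> j \<le> n \<Longrightarrow> \<alpha> (\<omega> i) \<le> \<alpha> (\<omega> j)"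
    and k: "1 \<le> k" "k \<le> n - 1"
    and gap: "\<alpha> (\<omega> k) < \<alpha> (\<omega> (k+1))"
    and cb: "\<alpha> (\<omega> k) < c" "c < b" "b < \<alpha> (\<omega> (k+1))"
    and f_def: "f = (\<lambda>t. \<Prod>j=1..n. (t - \<alpha> j))"
    and fbc: "f b = f c"
    and B_def: "B = (\<lambda>j. (b - \<alpha> j) / (c - \<alpha> j))"
  shows "(\<forall>i j. k + 1 \<le> i \<longrightarrow> i \<le> j \<longrightarrow> j \<le> n \<longrightarrow> B (\<omega> i) \<le> B (\<omega> j))
       \<and> B (\<omega> n) < 1 \<and> 1 < B (\<omega> 1)
       \<and> (\<forall>i j. 1 \<le> i \<longrightarrow> i \<le> j \<longrightarrow> j \<le> k \<longrightarrow> B (\<omega> i) \<le> B (\<omega> j))"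
proof -
  have n2: "k + 1 \<le> n" "1 \<le> n" using k by auto
  have lowc: "\<alpha> (\<omega> i) < c" if "1 \<le> i" "i \<le> k" for i
    using sorted[of i k] that n2 cb by linarith
  have highb: "b < \<alpha> (\<omega> i)" if "k + 1 \<le> i" "i \<le> n" for i
    using sorted[of "k+1" i] that n2 cb by linarith
  have A: "\<forall>i j. k + 1 \<le> i \<longrightarrow> i \<le> j \<longrightarrow> j \<le> n \<longrightarrow> B (\<omega> i) \<le> B (\<omega> j)"
  proof (intro allI impI)
    fix i j assume h: "k + 1 \<le> i" "i \<le> j" "j \<le> n"
    show "B (\<omega> i) \<le> B (\<omega> j)" unfolding B_def
      using aux_high[OF sorted[of i j] highb[of i]] h cb n2 by simp
  qed
  have C: "\<forall>i j. 1 \<le> i \<longrightarrow> i \<le> j \<longrightarrow> j \<le> k \<longrightarrow> B (\<omega> i) \<le> B (\<omega> j)"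
  proof (intro allI impI)
    fix i j assume h: "1 \<le> i" "i \<le> j" "j \<le> k"
    show "B (\<omega> i) \<le> B (\<omega> j)" unfolding B_def
      using aux_low[OF sorted[of i j] lowc[of j]] h cb n2 by simp
  qed
  have hn: "b < \<alpha> (\<omega> n)" using highb[of n] n2 by simp
  have l1: "\<alpha> (\<omega> 1) < c" using lowc[of 1] k by simp
  have Bn: "B (\<omega> n) < 1" unfolding B_def using hn cb by (simp add: divide_less_eq)
  have B1: "1 < B (\<omega> 1)" unfolding B_def using l1 cb by (simp add: less_divide_eq)
  show ?thesis using A Bn B1 C by blast
qed

end
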